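(* Let $n\ge1$ and $f,g\in\Lambda_n$ with $f\ne0$ and $f\cdot g\in\mathrm{im}(\nu_{n-1/n})$. If $\mu(f)=0$ and $\lambda(f)<p^{n-1}$, then $g\in\mathrm{im}(\nu_{n-1/n})$.
   Context: Let $p$ be an odd prime. For $n\ge0$ let $G_n$ be a cyclic group of order $p^n$ with surjections $G_n\to G_{n-1}$, $\Lambda_n=\mathbf{Z}_p[G_n]$, $\widetilde\Lambda_n=\mathbf{F}_p[G_n]$ and $\widetilde I_n$ the augmentation ideal of $\widetilde\Lambda_n$. For nonzero $f\in\Lambda_n$, $\mu(f)$ is the unique integer with $f\in p^{\mu(f)}\Lambda_n\setminus p^{\mu(f)+1}\Lambda_n$, and $\lambda(f)$ is the unique integer such that the reduction mod $p$ of $p^{-\mu(f)}f$ lies in $\widetilde I_n^{\lambda(f)}\setminus\widetilde I_n^{\lambda(f)+1}$. $\nu_{n-1/n}:\Lambda_{n-1}\to\Lambda_n$ is the $\mathbf{Z}_p$-linear map with $\nu_{n-1/n}(\sigma)=\sum_{\tau\in G_n,\ \tau\mapsto\sigma}\tau$ for $\sigma\in G_{n-1}$. *)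

theory Defs
  imports "HOL-Computational_Algebra.Primes"
begin

text \<open>Group rings of the cyclic group G_n = Z/p^n (generator 1, elements 0..p^n-1,
  surjection G_n -> G_(n-1) given by reduction mod p^(n-1)).  An element of a group ring
  is a coefficient function a :: nat => int with a i = 0 for i >= p^n.\<close>

definition grmult :: "int \<Rightarrow> nat \<Rightarrow> (nat \<Rightarrow> int) \<Rightarrow> (nat \<Rightarrow> int) \<Rightarrow> nat \<Rightarrow> int" where
  "grmult q N a b i = (if i < N then
     (\<Sum>j<N. \<Sum>l<N. if (j + l) mod N = i then a j * b l else 0) mod q else 0)"

definition gradd :: "int \<Rightarrow> nat \<Rightarrow> (nat \<Rightarrow> int) \<Rightarrow> (nat \<Rightarrow> int) \<Rightarrow> nat \<Rightarrow> int" where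
  "gradd q N a b i = (if i < N then (a i + b i) mod q else 0)"

text \<open>Lambda_n = Z_p[G_n], realised as the inverse limit of (Z/p^k)[G_n]:
  F k i is the i-th coefficient (a p-adic integer) reduced mod p^k, in [0,p^k).\<close>

definition Lam :: "nat \<Rightarrow> nat \<Rightarrow> (nat \<Rightarrow> nat \<Rightarrow> int) set" where
  "Lam p n = {F. \<forall>k i. 0 \<le> F k i \<and> F k i < int p ^ k \<and> (p ^ n \<le> i \<longrightarrow> F k i = 0)
                      \<and> F (Suc k) i mod int p ^ k = F k i}"

definition lam_mult :: "nat \<Rightarrow> nat \<Rightarrow> (nat \<Rightarrow> nat \<Rightarrow> int) \<Rightarrow> (nat \<Rightarrow> nat \<Rightarrow> int) \<Rightarrow> nat \<Rightarrow> nat \<Rightarrow> int" where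
  "lam_mult p n F G = (\<lambda>k. grmult (int p ^ k) (p ^ n) (F k) (G k))"

definition smul :: "nat \<Rightarrow> int \<Rightarrow> (nat \<Rightarrow> nat \<Rightarrow> int) \<Rightarrow> nat \<Rightarrow> nat \<Rightarrow> int" where
  "smul p c F = (\<lambda>k i. (c * F k i) mod int p ^ k)"

definition pLam :: "nat \<Rightarrow> nat \<Rightarrow> nat \<Rightarrow> (nat \<Rightarrow> nat \<Rightarrow> int) set" where
  "pLam p n m = {smul p (int p ^ m) G | G. G \<in> Lam p n}"

definition mu :: "nat \<Rightarrow> nat \<Rightarrow> (nat \<Rightarrow> nat \<Rightarrow> int) \<Rightarrow> nat" where
  "mu p n F = (THE m. F \<in> pLam p n m \<and> F \<notin> pLam p n (Suc m))"

definition Ltil :: "nat \<Rightarrow> nat \<Rightarrow> (nat \<Rightarrow> int) set" where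
  "Ltil p n = {a. \<forall>i. 0 \<le> a i \<and> a i < int p \<and> (p ^ n \<le> i \<longrightarrow> a i = 0)}"

definition aug :: "nat \<Rightarrow> nat \<Rightarrow> (nat \<Rightarrow> int) set" where
  "aug p n = {a \<in> Ltil p n. (\<Sum>i<p ^ n. a i) mod int p = 0}"

inductive_set idprod :: "nat \<Rightarrow> nat \<Rightarrow> (nat \<Rightarrow> int) set \<Rightarrow> (nat \<Rightarrow> int) set \<Rightarrow> (nat \<Rightarrow> int) set"
  for p n A B where
  zero: "(\<lambda>i. 0) \<in> idprod p n A B"
| prod: "a \<in> A \<Longrightarrow> b \<in> B \<Longrightarrow> grmult (int p) (p ^ n) a b \<in> idprod p n A B"
| add: "x \<in> idprod p n A B \<Longrightarrow> y \<in> idprod p n A B \<Longrightarrow> gradd (int p) (p ^ n) x y \<in> idprod p n A B"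

fun augpow :: "nat \<Rightarrow> nat \<Rightarrow> nat \<Rightarrow> (nat \<Rightarrow> int) set" where
  "augpow p n 0 = Ltil p n"
| "augpow p n (Suc m) = idprod p n (augpow p n m) (aug p n)"

definition lambda :: "nat \<Rightarrow> nat \<Rightarrow> (nat \<Rightarrow> nat \<Rightarrow> int) \<Rightarrow> nat" where
  "lambda p n F = (let G = (THE G. G \<in> Lam p n \<and> F = smul p (int p ^ mu p n F) G)
                   in THE l. G 1 \<in> augpow p n l \<and> G 1 \<notin> augpow p n (Suc l))"

text \<open>nu_{n-1/n}: sigma in G_(n-1) goes to the sum of its preimages in G_n.\<close>
definition nu :: "nat \<Rightarrow> nat \<Rightarrow> (nat \<Rightarrow> nat \<Rightarrow> int) \<Rightarrow> nat \<Rightarrow> nat \<Rightarrow> int" where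
  "nu p n G = (\<lambda>k i. if i < p ^ n then G k (i mod p ^ (n - 1)) else 0)"

end

theory Submission
  imports Defs "HOL-Computational_Algebra.Polynomial_Factorial"
begin


lemma monic_div:
  fixes M A :: "int poly"
  assumes "lead_coeff M = 1"
  shows "\<exists>D R. A = M * D + R \<and> (R = 0 \<or> degree R < degree M)"
proof -
  have M0: "M \<noteq> 0" using assms by auto
  obtain D R where dr: "pseudo_divmod A M = (D, R)" by (cases "pseudo_divmod A M") auto
  from pseudo_divmod[OF M0 dr] assms show ?thesis by auto
qed

lemma small_in_ideal:
  fixes M Q A B :: "int poly"
  assumes "lead_coeff M = 1" "degree Q < degree M" "Q = smult q A + M * B"
  shows "[:q:] dvd Q"
proof -
  obtain D R where dr: "A = M * D + R" "R = 0 \<or> degree R < degree M"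
    using monic_div[OF assms(1)] by blast
  have eq: "Q - smult q R = M * (B + smult q D)"
    using assms(3) dr(1) by (simp add: algebra_simps smult_add_right)
  have dl: "degree (Q - smult q R) < degree M"
  proof (cases "R = 0")
    case True then show ?thesis using assms(2) by simp
  next
    case False
    then have "degree (smult q R) < degree M" using dr(2) le_less_trans[OF degree_smult_le] by blast
    then show ?thesis using assms(2) degree_diff_le_max[of Q "smult q R"] by linarith
  qed
  have "B + smult q D = 0"
  proof (rule ccontr)
    assume "B + smult q D \<noteq> 0"
    then have "degree (M * (B + smult q D)) = degree M + degree (B + smult q D)"
      using assms(1) by (intro degree_mult_eq) auto
    with eq dl show False by simp
  qed
  with eq have "Q = smult q R" by simp
  then show ?thesis by (intro dvdI[of _ _ R]) simp
qed

lemma dvd_smult_self [simp]: "[:q:] dvd smult q (X :: int poly)"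
  by (intro dvdI[of _ _ X]) simp

lemma frob:
  fixes A B :: "int poly"
  assumes p: "prime p"
  shows "[:int p:] dvd ((A + B) ^ p - A ^ p - B ^ p)"
proof -
  define f where "f k = of_nat (p choose k) * A ^ k * B ^ (p - k)" for k
  have p1: "p > 1" using p prime_gt_1_nat by blast
  have set: "{..p} = insert 0 (insert p {1..<p})" using p1 by auto
  have "(A + B) ^ p = (\<Sum>k\<le>p. f k)" unfolding f_def by (rule binomial_ring)
  also have "\<dots> = f 0 + (f p + (\<Sum>k\<in>{1..<p}. f k))"
    unfolding set using p1 by (subst sum.insert; auto)+
  finally have eq: "(A + B) ^ p - A ^ p - B ^ p = (\<Sum>k\<in>{1..<p}. f k)"
    by (simp add: f_def)
  have "[:int p:] dvd f k" if "k \<in> {1..<p}" for k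
  proof -
    have "p dvd (p choose k)" using that p by (intro dvd_choose_prime) auto
    then obtain c where "p choose k = p * c" by (auto simp: dvd_def)
    then have "f k = [:int p:] * (of_nat c * A ^ k * B ^ (p - k))"
      unfolding f_def by (simp add: of_nat_poly algebra_simps)
    then show ?thesis by (simp del: of_nat_mult)
  qed
  then show ?thesis unfolding eq by (intro dvd_sum) auto
qed

lemma X_minus_1: "[:0,1:] - 1 = ([:-1,1:] :: int poly)"
  by (simp add: one_pCons)

lemma frob_iter:
  assumes p: "prime p"
  shows "[:int p:] dvd ([:0,1:] ^ (p ^ j) - 1 - [:-1,1:] ^ (p ^ j) :: int poly)"
proof (induction j)
  case 0
  then show ?case by (simp add: X_minus_1)
next
  case (Suc j)
  define a :: "int poly" where "a = [:0,1:] ^ (p ^ j)"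
  define b :: "int poly" where "b = [:-1,1:] ^ (p ^ j)"
  obtain C where C: "a - 1 - b = [:int p:] * C" using Suc unfolding a_def b_def by (auto simp: dvd_def)
  have a: "a = (b + 1) + [:int p:] * C" using C by (simp add: algebra_simps)
  have d1: "[:int p:] dvd ((b + 1 + [:int p:] * C) ^ p - (b + 1) ^ p - ([:int p:] * C) ^ p)"
    by (rule frob[OF p])
  have d2: "[:int p:] dvd ((b + 1) ^ p - b ^ p - 1 ^ p)" by (rule frob[OF p])
  have p0: "p > 0" using p prime_gt_0_nat by blast
  have d3: "[:int p:] dvd ([:int p:] * C) ^ p" using p0 by (meson dvd_power dvd_trans dvd_triv_left)
  have "a ^ p - 1 - b ^ p = ((b + 1 + [:int p:] * C) ^ p - (b + 1) ^ p - ([:int p:] * C) ^ p)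
     + ((b + 1) ^ p - b ^ p - 1 ^ p) + ([:int p:] * C) ^ p"
    unfolding a by simp
  then have "[:int p:] dvd (a ^ p - 1 - b ^ p)" using d1 d2 d3 by (metis dvd_add)
  moreover have "a ^ p = [:0,1:] ^ (p ^ Suc j)" "b ^ p = [:-1,1:] ^ (p ^ Suc j)"
    unfolding a_def b_def by (simp_all add: power_mult[symmetric] mult.commute)
  ultimately show ?case by simp
qed

definition Phi :: "nat \<Rightarrow> nat \<Rightarrow> int poly" where
  "Phi p m = (\<Sum>j<p. [:0,1:] ^ (j * m))"

lemma Phi_mult: "Phi p m * ([:0,1:] ^ m - 1) = [:0,1:] ^ (p * m) - 1"
proof -
  have "([:0,1:] ^ m) ^ p - 1 = ([:0,1:] ^ m - 1) * (\<Sum>i<p. ([:0,1:] ^ m) ^ i :: int poly)"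
    by (rule power_diff_1_eq)
  then show ?thesis unfolding Phi_def
    by (simp add: power_mult[symmetric] mult.commute)
qed

lemma poly_Phi_1: "poly (Phi p m) 1 = int p"
  by (simp add: Phi_def poly_sum)

lemma content_pie_pow: "content ([:-1,1:] ^ k :: int poly) = 1"
proof -
  have c: "content ([:-1,1:] :: int poly) = 1" by (simp add: content_def)
  show ?thesis
  proof (induction k)
    case (Suc k)
    have "content ([:-1,1:] * [:-1,1:] ^ k :: int poly) = content ([:-1,1:] :: int poly) * content ([:-1,1:] ^ k :: int poly)"
      by (rule content_mult)
    then show ?case using Suc c by simp
  qed simp
qed

lemma monic_cancel:
  fixes R :: "int poly"
  assumes "[:q:] dvd R * [:-1,1:] ^ k"
  shows "[:q:] dvd R"
  using assms by (simp add: const_poly_dvd_iff_dvd_content content_mult content_pie_pow)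

lemma Phi_cong:
  assumes p: "prime p"
  shows "[:int p:] dvd (Phi p (p ^ e) - [:-1,1:] ^ (p ^ Suc e - p ^ e))"
proof -
  define m where "m = p ^ e"
  define pie :: "int poly" where "pie = [:-1,1:]"
  have le: "m \<le> p ^ Suc e" unfolding m_def using p prime_ge_1_nat by auto
  have d1: "[:int p:] dvd ([:0,1:] ^ m - 1 - pie ^ m)" unfolding m_def pie_def by (rule frob_iter[OF p])
  have d2: "[:int p:] dvd ([:0,1:] ^ (p * m) - 1 - pie ^ (p * m))"
    unfolding m_def pie_def using frob_iter[OF p, of "Suc e"] by simp
  have "(Phi p m - pie ^ (p ^ Suc e - m)) * pie ^ m = Phi p m * pie ^ m - pie ^ (p * m)"
    using le by (simp add: algebra_simps power_add[symmetric] m_def)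
  also have "\<dots> = ([:0,1:] ^ (p * m) - 1 - pie ^ (p * m)) - Phi p m * ([:0,1:] ^ m - 1 - pie ^ m)"
    unfolding Phi_mult[symmetric] by (simp add: algebra_simps)
  finally have "[:int p:] dvd (Phi p m - pie ^ (p ^ Suc e - m)) * pie ^ m"
    using d1 d2 by (metis dvd_diff dvd_mult)
  then show ?thesis using monic_cancel unfolding m_def pie_def by blast
qed

definition inJ :: "nat \<Rightarrow> nat \<Rightarrow> nat \<Rightarrow> int poly \<Rightarrow> bool" where
  "inJ p m j h \<longleftrightarrow> (\<exists>a b. h = Phi p m * a + [:-1,1:] ^ j * b)"

lemma inJ_add: "inJ p m j h1 \<Longrightarrow> inJ p m j h2 \<Longrightarrow> inJ p m j (h1 + h2)"
proof -
  assume "inJ p m j h1" "inJ p m j h2"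
  then obtain a1 b1 a2 b2 where "h1 = Phi p m * a1 + [:-1,1:] ^ j * b1"
    "h2 = Phi p m * a2 + [:-1,1:] ^ j * b2" unfolding inJ_def by blast
  then have "h1 + h2 = Phi p m * (a1 + a2) + [:-1,1:] ^ j * (b1 + b2)" by (simp add: distrib_left)
  then show ?thesis unfolding inJ_def by blast
qed

lemma inJ_diff: "inJ p m j h1 \<Longrightarrow> inJ p m j h2 \<Longrightarrow> inJ p m j (h1 - h2)"
proof -
  assume "inJ p m j h1" "inJ p m j h2"
  then obtain a1 b1 a2 b2 where "h1 = Phi p m * a1 + [:-1,1:] ^ j * b1"
    "h2 = Phi p m * a2 + [:-1,1:] ^ j * b2" unfolding inJ_def by blast
  then have "h1 - h2 = Phi p m * (a1 - a2) + [:-1,1:] ^ j * (b1 - b2)" by (simp add: right_diff_distrib)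
  then show ?thesis unfolding inJ_def by blast
qed

lemma inJ_mult: "inJ p m j h \<Longrightarrow> inJ p m j (h * c)"
proof -
  assume "inJ p m j h"
  then obtain a1 b1 where "h = Phi p m * a1 + [:-1,1:] ^ j * b1" unfolding inJ_def by blast
  then have "h * c = Phi p m * (a1 * c) + [:-1,1:] ^ j * (b1 * c)" by (simp add: algebra_simps)
  then show ?thesis unfolding inJ_def by blast
qed

lemma inJ_Phi: "inJ p m j (Phi p m * c)"
  unfolding inJ_def by (intro exI[of _ c] exI[of _ 0]) simp

lemma inJ_pie: "j \<le> l \<Longrightarrow> inJ p m j ([:-1,1:] ^ l * c)"
  unfolding inJ_def by (intro exI[of _ 0] exI[of _ "[:-1,1:] ^ (l - j) * c"])
    (simp add: power_add[symmetric] mult.assoc[symmetric])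

lemma inJ_mono: "inJ p m l h \<Longrightarrow> j \<le> l \<Longrightarrow> inJ p m j h"
  unfolding inJ_def
proof (elim exE)
  fix a b assume h: "h = Phi p m * a + [:-1,1:] ^ l * b" and jl: "j \<le> l"
  then show "\<exists>a b. h = Phi p m * a + [:-1, 1:] ^ j * b"
    by (intro exI[of _ a] exI[of _ "[:-1,1:] ^ (l - j) * b"])
      (simp add: power_add[symmetric] mult.assoc[symmetric])
qed

lemma inJ_prod: "inJ p m a h1 \<Longrightarrow> inJ p m b h2 \<Longrightarrow> inJ p m (a + b) (h1 * h2)"
proof -
  assume "inJ p m a h1" "inJ p m b h2"
  then obtain a1 b1 a2 b2 where h1: "h1 = Phi p m * a1 + [:-1,1:] ^ a * b1"
    and h2: "h2 = Phi p m * a2 + [:-1,1:] ^ b * b2" unfolding inJ_def by blast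
  have "h1 * h2 = Phi p m * (a1 * h2 + [:-1,1:] ^ a * b1 * a2) + [:-1,1:] ^ (a + b) * (b1 * b2)"
    unfolding h1 h2 by (simp add: algebra_simps power_add)
  then show ?thesis unfolding inJ_def by blast
qed

lemma inJ_cancel1:
  assumes p: "p \<noteq> 0" and h: "inJ p m (Suc j) ([:-1,1:] * h)"
  shows "inJ p m j h"
proof -
  obtain a b where ab: "[:-1,1:] * h = Phi p m * a + [:-1,1:] ^ Suc j * b"
    using h unfolding inJ_def by blast
  have "poly ([:-1,1:] * h) 1 = poly (Phi p m * a + [:-1,1:] ^ Suc j * b) 1" using ab by simp
  then have "int p * poly a 1 = 0" by (simp add: poly_Phi_1)
  then have "poly a 1 = 0" using p by simp
  then obtain a' where a': "a = [:-1,1:] * a'" using poly_eq_0_iff_dvd[of a 1] by (auto simp: dvd_def)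
  have "[:-1,1:] * h = [:-1,1:] * (Phi p m * a' + [:-1,1:] ^ j * b)"
    using ab a' by (simp add: algebra_simps)
  then have "h = Phi p m * a' + [:-1,1:] ^ j * b"
    by (subst (asm) mult_left_cancel) auto
  then show ?thesis unfolding inJ_def by blast
qed

lemma inJ_cancel:
  assumes p: "p \<noteq> 0"
  shows "inJ p m (j + l) ([:-1,1:] ^ l * h) \<Longrightarrow> inJ p m j h"
proof (induction l arbitrary: j h)
  case 0
  then show ?case by simp
next
  case (Suc l)
  have "inJ p m (Suc j + l) ([:-1,1:] ^ l * ([:-1,1:] * h))"
    using Suc.prems by (simp add: algebra_simps)
  then have "inJ p m (Suc j) ([:-1,1:] * h)" by (rule Suc.IH)
  then show ?case by (rule inJ_cancel1[OF p])
qed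

lemma inJ_1_iff:
  "inJ p m 1 h \<longleftrightarrow> int p dvd poly h 1"
proof
  assume "inJ p m 1 h"
  then obtain a b where "h = Phi p m * a + [:-1,1:] ^ 1 * b" unfolding inJ_def by blast
  then have "poly h 1 = int p * poly a 1" by (simp add: poly_Phi_1)
  then show "int p dvd poly h 1" by simp
next
  assume "int p dvd poly h 1"
  then obtain z where z: "poly h 1 = int p * z" by (auto simp: dvd_def)
  have "poly (h - [:poly h 1:]) 1 = 0" by simp
  then have "[:-1,1:] dvd (h - [:poly h 1:])" by (metis poly_eq_0_iff_dvd)
  then obtain q where q: "h - [:poly h 1:] = [:-1,1:] * q" by (rule dvdE)
  have "poly (Phi p m - [:int p:]) 1 = 0" by (simp add: poly_Phi_1)
  then have "[:-1,1:] dvd (Phi p m - [:int p:])" by (metis poly_eq_0_iff_dvd)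
  then obtain w where w: "Phi p m - [:int p:] = [:-1,1:] * w" by (rule dvdE)
  have "[:poly h 1:] = [:int p:] * [:z:]" using z by simp
  also have "\<dots> = (Phi p m - [:-1,1:] * w) * [:z:]" by (subst w[symmetric]) simp
  also have "\<dots> = Phi p m * [:z:] - [:-1,1:] * (w * [:z:])" by (simp only: left_diff_distrib mult.assoc)
  finally have hz: "[:poly h 1:] = Phi p m * [:z:] - [:-1,1:] * (w * [:z:])" .
  have "h = Phi p m * [:z:] + [:-1,1:] ^ 1 * (q - w * [:z:])"
    using q hz by algebra
  then show "inJ p m 1 h" unfolding inJ_def by blast
qed

lemma inJ_unit:
  assumes p: "prime p" and v: "\<not> int p dvd poly v 1"
  shows "inJ p m j (v * g) \<Longrightarrow> inJ p m j g"
proof (induction j)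
  case 0
  then show ?case unfolding inJ_def by (intro exI[of _ 0] exI[of _ g]) simp
next
  case (Suc j)
  have "inJ p m j (v * g)" using Suc.prems by (rule inJ_mono) simp
  then have "inJ p m j g" by (rule Suc.IH)
  then obtain a b where g: "g = Phi p m * a + [:-1,1:] ^ j * b" unfolding inJ_def by blast
  have "inJ p m (Suc j) (v * g - Phi p m * (v * a))" using Suc.prems inJ_Phi by (rule inJ_diff)
  moreover have "v * g - Phi p m * (v * a) = [:-1,1:] ^ j * (v * b)" unfolding g by (simp add: algebra_simps)
  ultimately have "inJ p m (1 + j) ([:-1,1:] ^ j * (v * b))" by simp
  moreover have p0: "p \<noteq> 0" using p by auto
  ultimately have "inJ p m 1 (v * b)" using inJ_cancel[OF p0] by blast
  then have "int p dvd poly v 1 * poly b 1" by (metis inJ_1_iff poly_mult)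
  then have "int p dvd poly b 1" using v p by (simp add: prime_dvd_mult_iff)
  then have "inJ p m 1 b" by (metis inJ_1_iff)
  then obtain a2 b2 where b: "b = Phi p m * a2 + [:-1,1:] ^ 1 * b2" unfolding inJ_def by blast
  have "g = Phi p m * (a + [:-1,1:] ^ j * a2) + [:-1,1:] ^ Suc j * b2"
    unfolding g b by (simp add: algebra_simps)
  then show ?case unfolding inJ_def by blast
qed

lemma Phi_split:
  assumes p: "prime p"
  obtains h where "Phi p (p ^ e) = [:-1,1:] ^ (p ^ Suc e - p ^ e) + [:int p:] * h"
    and "poly h 1 = 1"
proof -
  define phi where "phi = p ^ Suc e - p ^ e"
  have phi0: "phi > 0" unfolding phi_def using p prime_gt_1_nat[OF p]
    by (simp add: power_strict_increasing_iff)
  obtain h where h: "Phi p (p ^ e) - [:-1,1:] ^ phi = [:int p:] * h"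
    using Phi_cong[OF p, of e] unfolding phi_def by (rule dvdE)
  have "poly (Phi p (p ^ e) - [:-1,1:] ^ phi) 1 = int p * poly h 1" unfolding h by simp
  then have "int p = int p * poly h 1" using phi0 by (simp add: poly_Phi_1 zero_power)
  then have "poly h 1 = 1" using p by (metis mult_cancel_left1 of_nat_eq_0_iff not_prime_0)
  moreover have "Phi p (p ^ e) = [:-1,1:] ^ phi + [:int p:] * h" using h by (metis diff_add_cancel add.commute)
  ultimately show ?thesis using that unfolding phi_def by blast
qed

lemma p_inJ:
  assumes p: "prime p"
  shows "inJ p (p ^ e) (p ^ Suc e - p ^ e) [:int p:]"
proof -
  obtain h where h: "Phi p (p ^ e) = [:-1,1:] ^ (p ^ Suc e - p ^ e) + [:int p:] * h"
    and h1: "poly h 1 = 1" using Phi_split[OF p] by blast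
  have "h * [:int p:] = Phi p (p ^ e) * 1 - [:-1,1:] ^ (p ^ Suc e - p ^ e) * 1" using h
    by (metis add_diff_cancel_left' mult.commute mult_1_right)
  moreover have "inJ p (p ^ e) (p ^ Suc e - p ^ e) (Phi p (p ^ e) * 1 - [:-1,1:] ^ (p ^ Suc e - p ^ e) * 1)"
    by (intro inJ_diff inJ_Phi inJ_pie) simp
  ultimately have "inJ p (p ^ e) (p ^ Suc e - p ^ e) (h * [:int p:])" by simp
  moreover have "\<not> int p dvd poly h 1"
  proof
    assume "int p dvd poly h 1"
    then have "int p dvd 1" using h1 by simp
    then have "p dvd 1" by (metis of_nat_1 of_nat_dvd_iff)
    then show False using p by simp
  qed
  ultimately show ?thesis using inJ_unit[OF p] by blast
qed

lemma ppow_inJ: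
  assumes p: "prime p"
  shows "inJ p (p ^ e) (k * (p ^ Suc e - p ^ e)) [:int p ^ k:]"
proof (induction k)
  case 0
  then show ?case unfolding inJ_def by (intro exI[of _ 0] exI[of _ 1]) simp
next
  case (Suc k)
  have "inJ p (p ^ e) ((p ^ Suc e - p ^ e) + k * (p ^ Suc e - p ^ e)) ([:int p:] * [:int p ^ k:])"
    by (rule inJ_prod[OF p_inJ[OF p] Suc.IH])
  moreover have "[:int p:] * [:int p ^ k:] = [:int p ^ Suc k:]" by simp
  ultimately show ?case by (simp add: mult.commute)
qed

lemma pie_pow_in:
  assumes p: "prime p"
  shows "\<exists>a b. [:-1,1:] ^ (k * (p ^ Suc e - p ^ e)) = Phi p (p ^ e) * a + smult (int p ^ k) b"
proof (induction k)
  case 0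
  then show ?case by (intro exI[of _ 0] exI[of _ 1]) simp
next
  case (Suc k)
  obtain h where h: "Phi p (p ^ e) = [:-1,1:] ^ (p ^ Suc e - p ^ e) + [:int p:] * h"
    using Phi_split[OF p] by blast
  obtain a b where ab: "[:-1,1:] ^ (k * (p ^ Suc e - p ^ e)) = Phi p (p ^ e) * a + smult (int p ^ k) b"
    using Suc.IH by blast
  have e1: "[:-1,1:] ^ (Suc k * (p ^ Suc e - p ^ e)) = [:-1,1:] ^ (k * (p ^ Suc e - p ^ e)) * [:-1,1:] ^ (p ^ Suc e - p ^ e)"
  proof -
    have "Suc k * (p ^ Suc e - p ^ e) = k * (p ^ Suc e - p ^ e) + (p ^ Suc e - p ^ e)" by simp
    then show ?thesis by (simp only: power_add)
  qed
  have e2: "smult (int p ^ Suc k) (- (b * h)) = - (smult (int p ^ k) b * ([:int p:] * h))"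
    by (simp add: algebra_simps)
  have "[:-1,1:] ^ (Suc k * (p ^ Suc e - p ^ e)) = Phi p (p ^ e) * (a * [:-1,1:] ^ (p ^ Suc e - p ^ e) + smult (int p ^ k) b) + smult (int p ^ Suc k) (- (b * h))"
  proof -
    have gen: "\<And>P T H A B Q :: int poly. P = T + Q * H \<Longrightarrow> (P * A + B) * T = P * (A * T + B) + - (B * (Q * H))"
      by algebra
    show ?thesis unfolding e1 e2 ab by (rule gen[OF h])
  qed
  then show ?case by blast
qed

lemma val_main:
  fixes f g w s c A B :: "int poly"
  assumes p: "prime p"
    and f: "f = [:-1,1:] ^ l * w + smult (int p) s + Phi p (p ^ e) * c"
    and nd: "\<not> int p dvd poly w 1"
    and l: "l < p ^ Suc e - p ^ e"
    and fg: "f * g = smult (int p ^ Suc k) A + Phi p (p ^ e) * B"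
  shows "\<exists>a b. g = Phi p (p ^ e) * a + smult (int p ^ k) b"
proof -
  define phi where "phi = p ^ Suc e - p ^ e"
  have p0: "p \<noteq> 0" using p by auto
  define Ph where "Ph = Phi p (p ^ e)"
  define pie :: "int poly" where "pie = [:-1,1:]"
  obtain al be where albe: "[:int p:] = Ph * al + pie ^ phi * be"
    using p_inJ[OF p, of e] unfolding inJ_def phi_def Ph_def pie_def by blast
  define v where "v = w + pie ^ (phi - l) * be * s"
  have pv: "poly v 1 = poly w 1" using l unfolding v_def phi_def pie_def by (simp add: zero_power)
  have fv: "f = pie ^ l * v + Ph * (c + al * s)"
  proof -
    have "smult (int p) s = [:int p:] * s" by simp
    also have "\<dots> = Ph * al * s + pie ^ phi * be * s" unfolding albe by (simp add: algebra_simps)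
    also have "pie ^ phi = pie ^ l * pie ^ (phi - l)" using l unfolding phi_def by (simp add: power_add[symmetric])
    finally have "smult (int p) s = Ph * al * s + pie ^ l * pie ^ (phi - l) * be * s" .
    then show ?thesis unfolding f v_def Ph_def[symmetric] pie_def[symmetric] by (simp add: algebra_simps)
  qed
  have "inJ p (p ^ e) (Suc k * phi) (f * g)"
  proof -
    have "inJ p (p ^ e) (Suc k * phi) ([:int p ^ Suc k:] * A)" unfolding phi_def
      by (intro inJ_mult ppow_inJ[OF p])
    moreover have "[:int p ^ Suc k:] * A = smult (int p ^ Suc k) A" by simp
    ultimately show ?thesis unfolding fg by (metis inJ_add inJ_Phi)
  qed
  then have "inJ p (p ^ e) (Suc k * phi) (f * g - Ph * ((c + al * s) * g))"
    unfolding Ph_def by (intro inJ_diff inJ_Phi)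
  moreover have "f * g - Ph * ((c + al * s) * g) = pie ^ l * (v * g)" unfolding fv by (simp add: algebra_simps)
  moreover have "Suc k * phi = (Suc k * phi - l) + l" using l unfolding phi_def by simp
  ultimately have "inJ p (p ^ e) ((Suc k * phi - l) + l) (pie ^ l * (v * g))" by simp
  then have "inJ p (p ^ e) (Suc k * phi - l) (v * g)" unfolding pie_def
    by (rule inJ_cancel[OF p0])
  then have "inJ p (p ^ e) (Suc k * phi - l) g" using inJ_unit[OF p, of v] nd pv by simp
  then have "inJ p (p ^ e) (k * phi) g" by (rule inJ_mono) (use l in \<open>simp add: phi_def\<close>)
  then obtain a b where g: "g = Ph * a + pie ^ (k * phi) * b" unfolding inJ_def Ph_def pie_def by blast
  obtain a' b' where ab': "pie ^ (k * phi) = Ph * a' + smult (int p ^ k) b'"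
    using pie_pow_in[OF p, of k e] unfolding phi_def Ph_def pie_def by blast
  have "g = Ph * (a + a' * b) + smult (int p ^ k) (b' * b)" unfolding g ab' by (simp add: algebra_simps)
  then show ?thesis unfolding Ph_def by blast
qed



definition Pl :: "nat \<Rightarrow> (nat \<Rightarrow> int) \<Rightarrow> int poly" where
  "Pl N a = (\<Sum>i<N. monom (a i) i)"

lemma coeff_Pl: "coeff (Pl N a) t = (if t < N then a t else 0)"
  unfolding Pl_def coeff_sum by (simp add: coeff_monom)

lemma deg_lt:
  fixes Q :: "int poly"
  assumes "N > 0" "\<And>t. t \<ge> N \<Longrightarrow> coeff Q t = 0"
  shows "degree Q < N"
proof -
  have "degree Q \<le> N - 1" using assms by (intro degree_le) auto
  then show ?thesis using assms(1) by linarith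
qed

lemma degree_Pl: "N > 0 \<Longrightarrow> degree (Pl N a) < N"
  by (rule deg_lt) (auto simp: coeff_Pl)

lemma Pl_coeff: "N > 0 \<Longrightarrow> degree Q < N \<Longrightarrow> Pl N (coeff Q) = Q"
  by (rule poly_eqI) (auto simp: coeff_Pl coeff_eq_0)

lemma Pl_add: "Pl N (\<lambda>i. a i + b i) = Pl N a + Pl N b"
  by (rule poly_eqI) (simp add: coeff_Pl)

lemma Pl_diff: "Pl N (\<lambda>i. a i - b i) = Pl N a - Pl N b"
  by (rule poly_eqI) (simp add: coeff_Pl)

lemma Pl_smult: "Pl N (\<lambda>i. q * a i) = smult q (Pl N a)"
  by (rule poly_eqI) (simp add: coeff_Pl)

lemma Pl_cong: "(\<And>i. i < N \<Longrightarrow> a i = b i) \<Longrightarrow> Pl N a = Pl N b"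
  by (rule poly_eqI) (simp add: coeff_Pl)

lemma Pl_dvd: "(\<And>i. i < N \<Longrightarrow> q dvd r i) \<Longrightarrow> [:q:] dvd Pl N r"
  by (simp add: const_poly_dvd_iff coeff_Pl)

lemma Pl_mod: "[:q:] dvd (Pl N (\<lambda>i. r i mod q) - Pl N r)"
proof -
  have "Pl N (\<lambda>i. r i mod q) - Pl N r = Pl N (\<lambda>i. r i mod q - r i)" by (simp add: Pl_diff)
  moreover have "[:q:] dvd Pl N (\<lambda>i. r i mod q - r i)"
    by (rule Pl_dvd) (metis dvd_minus_mod minus_diff_eq dvd_minus_iff)
  ultimately show ?thesis by simp
qed

definition inQ :: "int \<Rightarrow> nat \<Rightarrow> int poly \<Rightarrow> bool" where
  "inQ q N Q \<longleftrightarrow> (\<exists>A B. Q = smult q A + ([:0,1:] ^ N - 1) * B)"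

lemma inQ_add: "inQ q N Q1 \<Longrightarrow> inQ q N Q2 \<Longrightarrow> inQ q N (Q1 + Q2)"
proof -
  assume "inQ q N Q1" "inQ q N Q2"
  then obtain A1 B1 A2 B2 where "Q1 = smult q A1 + ([:0,1:] ^ N - 1) * B1"
    "Q2 = smult q A2 + ([:0,1:] ^ N - 1) * B2" unfolding inQ_def by blast
  then have "Q1 + Q2 = smult q (A1 + A2) + ([:0,1:] ^ N - 1) * (B1 + B2)"
    by (simp add: distrib_left smult_add_right)
  then show ?thesis unfolding inQ_def by blast
qed

lemma inQ_diff: "inQ q N Q1 \<Longrightarrow> inQ q N Q2 \<Longrightarrow> inQ q N (Q1 - Q2)"
proof -
  assume "inQ q N Q1" "inQ q N Q2"
  then obtain A1 B1 A2 B2 where "Q1 = smult q A1 + ([:0,1:] ^ N - 1) * B1"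
    "Q2 = smult q A2 + ([:0,1:] ^ N - 1) * B2" unfolding inQ_def by blast
  then have "Q1 - Q2 = smult q (A1 - A2) + ([:0,1:] ^ N - 1) * (B1 - B2)"
    by (simp add: right_diff_distrib smult_diff_right)
  then show ?thesis unfolding inQ_def by blast
qed

lemma inQ_mult: "inQ q N Q \<Longrightarrow> inQ q N (C * Q)"
proof -
  assume "inQ q N Q"
  then obtain A B where "Q = smult q A + ([:0,1:] ^ N - 1) * B" unfolding inQ_def by blast
  moreover have "\<And>Q S M B :: int poly. Q = S + M * B \<Longrightarrow> C * Q = C * S + M * (C * B)" by algebra
  ultimately have "C * Q = C * smult q A + ([:0,1:] ^ N - 1) * (C * B)" by blast
  then have "C * Q = smult q (C * A) + ([:0,1:] ^ N - 1) * (C * B)" by simp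
  then show ?thesis unfolding inQ_def by blast
qed

lemma inQ_dvd_q: "[:q:] dvd Q \<Longrightarrow> inQ q N Q"
proof -
  assume "[:q:] dvd Q"
  then obtain k where "Q = [:q:] * k" by (rule dvdE)
  then show ?thesis unfolding inQ_def by (intro exI[of _ k] exI[of _ 0]) simp
qed

lemma inQ_dvd_M: "([:0,1:] ^ N - 1) dvd Q \<Longrightarrow> inQ q N Q"
proof -
  assume "([:0,1:] ^ N - 1) dvd Q"
  then obtain k where "Q = ([:0,1:] ^ N - 1) * k" by (rule dvdE)
  then show ?thesis unfolding inQ_def by (intro exI[of _ 0] exI[of _ k]) simp
qed

lemma monom_mod:
  "([:0,1:] ^ N - 1 :: int poly) dvd (monom c t - monom c (t mod N))"
proof -
  have e: "[:0,1:] ^ t = ([:0,1:] ^ (t mod N) * ([:0,1:] ^ N) ^ (t div N) :: int poly)"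
    unfolding power_mult[symmetric] power_add[symmetric] by simp
  have "monom c t - monom c (t mod N) = monom c (t mod N) * (([:0,1:] ^ N) ^ (t div N) - 1)"
    unfolding monom_altdef e by (simp add: algebra_simps)
  moreover have "([:0,1:] ^ N - 1 :: int poly) dvd (([:0,1:] ^ N) ^ (t div N) - 1)"
    by (simp add: power_diff_1_eq)
  ultimately show ?thesis by simp
qed

lemma grmult_Pl:
  assumes N: "N > 0"
  shows "inQ q N (Pl N (grmult q N a b) - Pl N a * Pl N b)"
proof -
  define conv where "conv i = (\<Sum>j<N. \<Sum>l<N. if (j + l) mod N = i then a j * b l else 0)" for i
  have g: "Pl N (grmult q N a b) = Pl N (\<lambda>i. conv i mod q)"
    by (rule Pl_cong) (simp add: grmult_def conv_def)
  have c: "Pl N conv = (\<Sum>j<N. \<Sum>l<N. monom (a j * b l) ((j + l) mod N))"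
  proof (rule poly_eqI)
    fix t
    show "coeff (Pl N conv) t = coeff (\<Sum>j<N. \<Sum>l<N. monom (a j * b l) ((j + l) mod N)) t"
    proof (cases "t < N")
      case True
      then show ?thesis by (simp add: coeff_Pl coeff_sum coeff_monom conv_def)
    next
      case False
      then have "\<And>j l. (j + l) mod N \<noteq> t" using N by (metis mod_less_divisor order_less_le_trans not_le)
      then show ?thesis using False by (simp add: coeff_Pl coeff_sum coeff_monom)
    qed
  qed
  have ab: "Pl N a * Pl N b = (\<Sum>j<N. \<Sum>l<N. monom (a j * b l) (j + l))"
    unfolding Pl_def sum_product by (simp add: mult_monom)
  have "([:0,1:] ^ N - 1) dvd (Pl N a * Pl N b - Pl N conv)"
    unfolding ab c sum_subtractf[symmetric] by (intro dvd_sum monom_mod)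
  then have "inQ q N (Pl N conv - Pl N a * Pl N b)"
    by (metis inQ_dvd_M dvd_minus_iff minus_diff_eq)
  moreover have "inQ q N (Pl N (\<lambda>i. conv i mod q) - Pl N conv)" by (intro inQ_dvd_q Pl_mod)
  ultimately have "inQ q N ((Pl N (\<lambda>i. conv i mod q) - Pl N conv) + (Pl N conv - Pl N a * Pl N b))"
    by (intro inQ_add)
  then show ?thesis unfolding g by simp
qed

lemma Xpow: "[:0,1:] ^ n = (monom 1 n :: int poly)"
  by (simp add: monom_altdef)

lemma coeff_XN1: "coeff ([:0,1:] ^ N - 1 :: int poly) t = (if t = N then 1 else 0) - (if t = 0 then 1 else 0)"
  by (simp add: coeff_1 Xpow coeff_monom)

lemma XN1:
  assumes "N > 0"
  shows "degree ([:0,1:] ^ N - 1 :: int poly) = N" "lead_coeff ([:0,1:] ^ N - 1 :: int poly) = 1"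
proof -
  have "degree ([:0,1:] ^ N - 1 :: int poly) \<le> N"
    by (rule degree_le, intro allI impI, subst coeff_XN1) simp
  moreover have "coeff ([:0,1:] ^ N - 1 :: int poly) N \<noteq> 0" using assms by (subst coeff_XN1) simp
  ultimately show d: "degree ([:0,1:] ^ N - 1 :: int poly) = N" by (simp add: le_antisym le_degree)
  show "lead_coeff ([:0,1:] ^ N - 1 :: int poly) = 1" unfolding d using assms by (subst coeff_XN1) simp
qed

lemma small_inQ:
  assumes "N > 0" "inQ q N R" "degree R < N"
  shows "[:q:] dvd R"
proof -
  obtain A B where "R = smult q A + ([:0,1:] ^ N - 1) * B" using assms(2) unfolding inQ_def by blast
  then show ?thesis using small_in_ideal[of "[:0,1:] ^ N - 1" R q A B] XN1[OF assms(1)] assms(3) by simp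
qed

lemma Pl_periodic:
  assumes "\<And>i. i < p * m \<Longrightarrow> c i = c (i mod m)"
  shows "Pl (p * m) c = Pl m c * Phi p m"
proof -
  have "Pl (p * m) c = (\<Sum>j<p. \<Sum>i\<in>{j * m..<j * m + m}. monom (c i) i)"
    unfolding Pl_def by (rule sum.nat_group[symmetric])
  also have "\<dots> = (\<Sum>j<p. \<Sum>i<m. monom (c i) (i + j * m))"
  proof (rule sum.cong[OF refl])
    fix j assume j: "j \<in> {..<p}"
    have "(\<Sum>i\<in>{j * m..<j * m + m}. monom (c i) i) = (\<Sum>i\<in>{0 + j * m..<m + j * m}. monom (c i) i)"
      by (simp add: add.commute)
    also have "\<dots> = (\<Sum>i\<in>{0..<m}. monom (c (i + j * m)) (i + j * m))"
      by (rule sum.shift_bounds_nat_ivl)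
    also have "\<dots> = (\<Sum>i<m. monom (c i) (i + j * m))"
    proof (rule sum.cong)
      fix i assume i: "i \<in> {..<m}"
      have "i + j * m < p * m"
      proof -
        have "i + j * m < m + j * m" using i by simp
        also have "\<dots> = Suc j * m" by simp
        also have "\<dots> \<le> p * m" using j by (intro mult_right_mono) auto
        finally show ?thesis .
      qed
      then have "c (i + j * m) = c ((i + j * m) mod m)" by (rule assms)
      also have "(i + j * m) mod m = i" using i by simp
      finally have "c (i + j * m) = c i" .
      then show "monom (c (i + j * m)) (i + j * m) = monom (c i) (i + j * m)" by simp
    qed (simp add: atLeast0LessThan)
    finally show "(\<Sum>i\<in>{j * m..<j * m + m}. monom (c i) i) = (\<Sum>i<m. monom (c i) (i + j * m))" .
  qed
  also have "\<dots> = Pl m c * Phi p m"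
    unfolding Pl_def Phi_def sum_product
    by (subst sum.swap) (simp add: Xpow mult_monom)
  finally show ?thesis .
qed

lemma extract_per:
  assumes m0: "0 < m" and mN: "m < N"
    and Q: "inQ q N ([:0,1:] ^ m * Pl N b - Pl N b)"
    and i: "i + m < N"
  shows "q dvd (b (i + m) - b i)"
proof -
  have N0: "N > 0" using mN by simp
  define g' where "g' = (\<Sum>j<N. monom (b j) ((j + m) mod N))"
  have xm: "[:0,1:] ^ m * Pl N b = (\<Sum>j<N. monom (b j) (j + m))"
    unfolding Pl_def sum_distrib_left by (simp add: Xpow mult_monom add.commute)
  have "([:0,1:] ^ N - 1) dvd ([:0,1:] ^ m * Pl N b - g')"
    unfolding xm g'_def sum_subtractf[symmetric] by (intro dvd_sum monom_mod)
  then have "inQ q N ([:0,1:] ^ m * Pl N b - g')" by (rule inQ_dvd_M)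
  with Q have "inQ q N (([:0,1:] ^ m * Pl N b - Pl N b) - ([:0,1:] ^ m * Pl N b - g'))"
    by (rule inQ_diff)
  then have R: "inQ q N (g' - Pl N b)" by simp
  have cg: "coeff g' t = (\<Sum>j<N. if (j + m) mod N = t then b j else 0)" for t
    unfolding g'_def coeff_sum by (simp add: coeff_monom)
  have "degree (g' - Pl N b) < N"
  proof (rule deg_lt[OF N0])
    fix t assume t: "t \<ge> N"
    have "\<And>j. (j + m) mod N \<noteq> t" using N0 t by (metis mod_less_divisor order_less_le_trans not_le)
    then show "coeff (g' - Pl N b) t = 0" using t by (simp add: cg coeff_Pl)
  qed
  from small_inQ[OF N0 R this] have d: "q dvd coeff (g' - Pl N b) (i + m)"
    by (simp add: const_poly_dvd_iff)
  have cond: "(j + m) mod N = i + m \<longleftrightarrow> j = i" if j: "j < N" for j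
  proof (cases "j + m < N")
    case True
    then show ?thesis by simp
  next
    case False
    then have "(j + m) mod N = j + m - N" using j mN by (simp add: le_mod_geq)
    then show ?thesis using False j i by auto
  qed
  have "coeff g' (i + m) = (\<Sum>j<N. if j = i then b j else 0)"
    unfolding cg by (rule sum.cong) (auto simp: cond)
  also have "\<dots> = b i" using i by simp
  finally have "q dvd b i - b (i + m)" using d i by (simp add: coeff_Pl)
  then show ?thesis by (metis dvd_minus_iff minus_diff_eq)
qed



definition inK :: "nat \<Rightarrow> nat \<Rightarrow> nat \<Rightarrow> int poly \<Rightarrow> bool" where
  "inK p N l Q \<longleftrightarrow> (\<exists>A B C. Q = [:int p:] * A + [:-1,1:] ^ l * B + ([:0,1:] ^ N - 1) * C)"

lemma inK_0: "inK p N 0 Q"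
  unfolding inK_def by (intro exI[of _ 0] exI[of _ Q] exI[of _ 0]) simp

lemma inK_addQ:
  assumes "inK p N l Q1" "inQ (int p) N Q2"
  shows "inK p N l (Q1 + Q2)"
proof -
  obtain A B C where 1: "Q1 = [:int p:] * A + [:-1,1:] ^ l * B + ([:0,1:] ^ N - 1) * C"
    using assms(1) unfolding inK_def by blast
  obtain A2 C2 where 2: "Q2 = smult (int p) A2 + ([:0,1:] ^ N - 1) * C2"
    using assms(2) unfolding inQ_def by blast
  have g: "\<And>Q1 Q2 P A B C A2 C2 T M :: int poly. Q1 = P * A + T * B + M * C \<Longrightarrow> Q2 = P * A2 + M * C2
     \<Longrightarrow> Q1 + Q2 = P * (A + A2) + T * B + M * (C + C2)" by algebra
  have "Q1 + Q2 = [:int p:] * (A + A2) + [:-1,1:] ^ l * B + ([:0,1:] ^ N - 1) * (C + C2)"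
    by (rule g[OF 1]) (simp add: 2)
  then show ?thesis unfolding inK_def by blast
qed

lemma inK_Suc:
  assumes "inK p N (Suc l) Q" shows "inK p N l Q"
proof -
  obtain A B C where 1: "Q = [:int p:] * A + [:-1,1:] ^ Suc l * B + ([:0,1:] ^ N - 1) * C"
    using assms(1) unfolding inK_def by blast
  then have "Q = [:int p:] * A + [:-1,1:] ^ l * ([:-1,1:] * B) + ([:0,1:] ^ N - 1) * C"
    by (simp only: power_Suc2 mult.assoc[symmetric])
  then show ?thesis unfolding inK_def by blast
qed

lemma inK_mono: "inK p N l Q \<Longrightarrow> j \<le> l \<Longrightarrow> inK p N j Q"
proof (induction l arbitrary: j)
  case 0
  then show ?case by simp
next
  case (Suc l)
  show ?case
  proof (cases "j = Suc l")
    case True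
    then show ?thesis using Suc.prems by simp
  next
    case False
    then have "j \<le> l" using Suc.prems by simp
    then show ?thesis using Suc.IH[OF inK_Suc[OF Suc.prems(1)]] by simp
  qed
qed

lemma inK_prod:
  assumes "inK p N l Q1" "inK p N 1 Q2"
  shows "inK p N (Suc l) (Q1 * Q2)"
proof -
  obtain A B C where 1: "Q1 = [:int p:] * A + [:-1,1:] ^ l * B + ([:0,1:] ^ N - 1) * C"
    using assms(1) unfolding inK_def by blast
  obtain A2 B2 C2 where 2: "Q2 = [:int p:] * A2 + [:-1,1:] ^ 1 * B2 + ([:0,1:] ^ N - 1) * C2"
    using assms(2) unfolding inK_def by blast
  have g: "\<And>Q1 Q2 P A B C A2 B2 C2 T U M :: int poly. Q1 = P * A + T * B + M * C \<Longrightarrow> Q2 = P * A2 + U * B2 + M * C2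
     \<Longrightarrow> Q1 * Q2 = P * (A * Q2 + T * B * A2) + (T * U) * (B * B2) + M * (C * Q2 + T * B * C2)" by algebra
  have "Q1 * Q2 = [:int p:] * (A * Q2 + [:-1,1:] ^ l * B * A2) + ([:-1,1:] ^ l * [:-1,1:] ^ 1) * (B * B2)
      + ([:0,1:] ^ N - 1) * (C * Q2 + [:-1,1:] ^ l * B * C2)"
    by (rule g[OF 1 2])
  moreover have "[:-1,1:] ^ l * [:-1,1:] ^ 1 = ([:-1,1:] ^ Suc l :: int poly)" by (simp add: power_Suc2)
  ultimately show ?thesis unfolding inK_def by metis
qed

lemma inK_1_of_dvd:
  assumes "int p dvd poly Q 1"
  shows "inK p N 1 Q"
proof -
  obtain z where z: "poly Q 1 = int p * z" using assms by (auto simp: dvd_def)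
  have "poly (Q - [:poly Q 1:]) 1 = 0" by simp
  then have "[:-1,1:] dvd (Q - [:poly Q 1:])" by (metis poly_eq_0_iff_dvd)
  then obtain q where q: "Q - [:poly Q 1:] = [:-1,1:] * q" by (rule dvdE)
  have "[:poly Q 1:] = [:int p:] * [:z:]" using z by simp
  moreover have "\<And>Q C P Z T q M :: int poly. C = P * Z \<Longrightarrow> Q - C = T * q \<Longrightarrow> Q = P * Z + T * q + M * 0"
    by algebra
  ultimately have "Q = [:int p:] * [:z:] + [:-1,1:] * q + ([:0,1:] ^ N - 1) * 0" using q by blast
  then have "Q = [:int p:] * [:z:] + [:-1,1:] ^ 1 * q + ([:0,1:] ^ N - 1) * 0" by simp
  then show ?thesis unfolding inK_def by blast
qed

lemma poly_Pl_1: "poly (Pl N a) 1 = (\<Sum>i<N. a i)"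
  unfolding Pl_def by (simp add: poly_sum poly_monom)

lemma Ltil_grmult: "grmult (int p) (p ^ n) a b \<in> Ltil p n" if "prime p"
proof -
  have "int p > 0" using that prime_gt_0_nat by simp
  then show ?thesis unfolding Ltil_def grmult_def by simp
qed

lemma Ltil_gradd: "gradd (int p) (p ^ n) a b \<in> Ltil p n" if "prime p"
proof -
  have "int p > 0" using that prime_gt_0_nat by simp
  then show ?thesis unfolding Ltil_def gradd_def by simp
qed

lemma gradd_Pl: "inQ q N (Pl N (gradd q N x y) - (Pl N x + Pl N y))"
proof -
  have "Pl N (gradd q N x y) = Pl N (\<lambda>i. (x i + y i) mod q)" by (rule Pl_cong) (simp add: gradd_def)
  moreover have "Pl N x + Pl N y = Pl N (\<lambda>i. x i + y i)" by (simp add: Pl_add)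
  ultimately show ?thesis by (simp add: inQ_dvd_q Pl_mod)
qed

lemma augpow_sub:
  assumes p: "prime p"
  shows "x \<in> augpow p n l \<Longrightarrow> x \<in> Ltil p n \<and> inK p (p ^ n) l (Pl (p ^ n) x)"
proof (induction l arbitrary: x)
  case 0
  then show ?case by (simp add: inK_0)
next
  case (Suc l)
  from Suc.prems have "x \<in> idprod p n (augpow p n l) (aug p n)" by simp
  then show ?case
  proof (induction rule: idprod.induct)
    case zero
    have "Pl (p ^ n) (\<lambda>i. 0) = [:int p:] * 0 + [:-1,1:] ^ Suc l * 0 + ([:0,1:] ^ (p ^ n) - 1) * 0"
      by (simp add: Pl_def)
    then have "inK p (p ^ n) (Suc l) (Pl (p ^ n) (\<lambda>i. 0))" unfolding inK_def by blast
    moreover have "(\<lambda>i. 0) \<in> Ltil p n" using p prime_gt_0_nat by (simp add: Ltil_def)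
    ultimately show ?case by blast
  next
    case (prod a b)
    have a: "inK p (p ^ n) l (Pl (p ^ n) a)" using Suc.IH prod(1) by blast
    have "int p dvd poly (Pl (p ^ n) b) 1" using prod(2) unfolding aug_def poly_Pl_1 by auto
    then have b: "inK p (p ^ n) 1 (Pl (p ^ n) b)" by (rule inK_1_of_dvd)
    have "inK p (p ^ n) (Suc l) (Pl (p ^ n) a * Pl (p ^ n) b + (Pl (p ^ n) (grmult (int p) (p ^ n) a b) - Pl (p ^ n) a * Pl (p ^ n) b))"
      by (intro inK_addQ inK_prod a b grmult_Pl) (use p prime_gt_0_nat in simp)
    then show ?case using Ltil_grmult[OF p] by simp
  next
    case (add x y)
    have "inK p (p ^ n) (Suc l) ((Pl (p ^ n) x + Pl (p ^ n) y) + (Pl (p ^ n) (gradd (int p) (p ^ n) x y) - (Pl (p ^ n) x + Pl (p ^ n) y)))"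
    proof (rule inK_addQ[OF _ gradd_Pl])
      have hx: "inK p (p ^ n) (Suc l) (Pl (p ^ n) x)" and hy: "inK p (p ^ n) (Suc l) (Pl (p ^ n) y)"
        using add by blast+
      obtain A B C where "Pl (p ^ n) x = [:int p:] * A + [:-1,1:] ^ Suc l * B + ([:0,1:] ^ (p ^ n) - 1) * C"
        using hx unfolding inK_def by blast
      moreover obtain A2 B2 C2 where "Pl (p ^ n) y = [:int p:] * A2 + [:-1,1:] ^ Suc l * B2 + ([:0,1:] ^ (p ^ n) - 1) * C2"
        using hy unfolding inK_def by blast
      moreover have "\<And>X Y P A B C A2 B2 C2 T M :: int poly. X = P * A + T * B + M * C \<Longrightarrow> Y = P * A2 + T * B2 + M * C2
        \<Longrightarrow> X + Y = P * (A + A2) + T * (B + B2) + M * (C + C2)" by algebra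
      ultimately show "inK p (p ^ n) (Suc l) (Pl (p ^ n) x + Pl (p ^ n) y)" unfolding inK_def by metis
    qed
    then show ?case using Ltil_gradd[OF p] by simp
  qed
qed

lemma small_dvd_eq:
  fixes a b q :: int
  assumes "0 \<le> a" "a < q" "0 \<le> b" "b < q" "q dvd (a - b)"
  shows "a = b"
proof -
  have "a mod q = b mod q" using assms(5) by (simp add: mod_eq_dvd_iff)
  then show ?thesis using assms by simp
qed

lemma Ltil_unique:
  assumes p: "prime p" and a: "a \<in> Ltil p n" and c: "c \<in> Ltil p n"
    and Q: "inQ (int p) (p ^ n) (Pl (p ^ n) a - Pl (p ^ n) c)"
  shows "a = c"
proof
  fix i
  have N0: "p ^ n > 0" using p prime_gt_0_nat by simp
  have "inQ (int p) (p ^ n) (Pl (p ^ n) (\<lambda>i. a i - c i))" using Q by (simp add: Pl_diff)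
  from small_inQ[OF N0 this degree_Pl[OF N0]]
  have d: "int p dvd coeff (Pl (p ^ n) (\<lambda>i. a i - c i)) i" by (simp add: const_poly_dvd_iff)
  show "a i = c i"
  proof (cases "i < p ^ n")
    case True
    then have "int p dvd (a i - c i)" using d by (simp add: coeff_Pl)
    then show ?thesis using a c unfolding Ltil_def by (intro small_dvd_eq) auto
  next
    case False
    then show ?thesis using a c unfolding Ltil_def by auto
  qed
qed

lemma canon:
  assumes p: "prime p"
  shows "\<exists>c \<in> Ltil p n. inQ (int p) (p ^ n) (Pl (p ^ n) c - Q)"
proof -
  define N where "N = p ^ n"
  have N0: "N > 0" unfolding N_def using p prime_gt_0_nat by simp
  obtain D R where DR: "Q = ([:0,1:] ^ N - 1) * D + R" "R = 0 \<or> degree R < degree ([:0,1:] ^ N - 1 :: int poly)"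
    using monic_div[OF XN1(2)[OF N0]] by blast
  have dR: "degree R < N" using DR(2) XN1(1)[OF N0] N0 by auto
  define c where "c i = (if i < N then coeff R i mod int p else 0)" for i
  have pp: "int p > 0" using p prime_gt_0_nat by simp
  have cL: "c \<in> Ltil p n" unfolding Ltil_def c_def N_def using pp by auto
  have "Pl N c = Pl N (\<lambda>i. coeff R i mod int p)" by (rule Pl_cong) (simp add: c_def)
  then have "Pl N c - Q = (Pl N (\<lambda>i. coeff R i mod int p) - Pl N (coeff R)) + ([:0,1:] ^ N - 1) * (- D)"
    using DR(1) Pl_coeff[OF N0 dR] by simp
  moreover have "inQ (int p) N (Pl N (\<lambda>i. coeff R i mod int p) - Pl N (coeff R))" by (intro inQ_dvd_q Pl_mod)
  moreover have "inQ (int p) N (([:0,1:] ^ N - 1) * (- D))" by (intro inQ_dvd_M) simp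
  ultimately have "inQ (int p) N (Pl N c - Q)" by (metis inQ_add)
  then show ?thesis using cL unfolding N_def by blast
qed

definition eX :: "nat \<Rightarrow> nat \<Rightarrow> int" where
  "eX p i = (if i = 0 then int p - 1 else if i = 1 then 1 else 0)"

lemma Pl_eX:
  assumes "N \<ge> 2"
  shows "Pl N (eX p) = [:int p:] + [:-1,1:]"
proof (rule poly_eqI)
  fix t
  show "coeff (Pl N (eX p)) t = coeff ([:int p:] + [:-1,1:]) t"
  proof -
    consider "t = 0" | "t = 1" | "t \<ge> 2" by linarith
    then show ?thesis
    proof cases
      case 1 then show ?thesis using assms by (simp add: coeff_Pl eX_def)
    next
      case 2 then show ?thesis using assms by (simp add: coeff_Pl eX_def)
    next
      case 3
      then obtain k where k: "t = Suc (Suc k)" by (metis add_2_eq_Suc le_Suc_ex)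
      then show ?thesis by (simp add: coeff_Pl eX_def)
    qed
  qed
qed

lemma eX_aug:
  assumes p: "prime p" and n: "n \<ge> 1"
  shows "eX p \<in> aug p n"
proof -
  have p2: "p \<ge> 2" using p prime_ge_2_nat by blast
  have "p ^ 1 \<le> p ^ n" using n p2 by (intro power_increasing) auto
  then have N2: "p ^ n \<ge> 2" using p2 by simp
  have L: "eX p \<in> Ltil p n" unfolding Ltil_def
  proof (intro CollectI allI conjI impI)
    fix i
    show "0 \<le> eX p i" "eX p i < int p" using p2 by (auto simp: eX_def)
    show "p ^ n \<le> i \<Longrightarrow> eX p i = 0" using N2 by (auto simp: eX_def)
  qed
  have "(\<Sum>i<p ^ n. eX p i) = poly (Pl (p ^ n) (eX p)) 1" by (simp add: poly_Pl_1)
  also have "\<dots> = int p" using N2 by (simp add: Pl_eX)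
  finally show ?thesis using L unfolding aug_def by simp
qed

lemma augpow_sup:
  assumes p: "prime p" and n: "n \<ge> 1"
  shows "c \<in> Ltil p n \<Longrightarrow> inK p (p ^ n) l (Pl (p ^ n) c) \<Longrightarrow> c \<in> augpow p n l"
proof (induction l arbitrary: c)
  case 0
  then show ?case by simp
next
  case (Suc l)
  define N where "N = p ^ n"
  have p2: "p \<ge> 2" using p prime_ge_2_nat by blast
  have "p ^ 1 \<le> p ^ n" using n p2 by (intro power_increasing) auto
  then have N2: "N \<ge> 2" unfolding N_def using p2 by simp
  obtain A B C where c: "Pl N c = [:int p:] * A + [:-1,1:] ^ Suc l * B + ([:0,1:] ^ N - 1) * C"
    using Suc.prems(2) unfolding inK_def N_def by blast
  define Q where "Q = [:-1,1:] ^ l * B"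
  obtain c' where c': "c' \<in> Ltil p n" "inQ (int p) N (Pl N c' - Q)" using canon[OF p] unfolding N_def by blast
  have "inK p N l (Q + (Pl N c' - Q))"
  proof (rule inK_addQ[OF _ c'(2)])
    have "Q = [:int p:] * 0 + [:-1,1:] ^ l * B + ([:0,1:] ^ N - 1) * 0" unfolding Q_def by simp
    then show "inK p N l Q" unfolding inK_def by blast
  qed
  then have "c' \<in> augpow p n l" using Suc.IH[OF c'(1)] unfolding N_def by simp
  then have x: "grmult (int p) N c' (eX p) \<in> augpow p n (Suc l)"
    unfolding N_def using eX_aug[OF p n] by (simp add: idprod.prod)
  have e: "Pl N (eX p) = [:int p:] + [:-1,1:]" using N2 by (rule Pl_eX)
  have q1: "inQ (int p) N (Pl N (grmult (int p) N c' (eX p)) - Pl N c' * Pl N (eX p))"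
    using N2 by (intro grmult_Pl) simp
  have q2: "inQ (int p) N (Pl N (eX p) * (Pl N c' - Q))" using c'(2) by (rule inQ_mult)
  have q3: "inQ (int p) N (Q * Pl N (eX p) - Pl N c)"
  proof -
    have g: "\<And>Q W P T B A M C X Y :: int poly. Q = W * B \<Longrightarrow> X = P + T \<Longrightarrow> Y = P * A + (W * T) * B + M * C \<Longrightarrow>
      Q * X - Y = P * (Q - A) + M * (- C)" by algebra
    have c2: "Pl N c = [:int p:] * A + ([:-1,1:] ^ l * [:-1,1:]) * B + ([:0,1:] ^ N - 1) * C"
      using c by (simp only: power_Suc2)
    have "Q * Pl N (eX p) - Pl N c = [:int p:] * (Q - A) + ([:0,1:] ^ N - 1) * (- C)"
      by (rule g[OF Q_def e c2])
    then have "Q * Pl N (eX p) - Pl N c = smult (int p) (Q - A) + ([:0,1:] ^ N - 1) * (- C)" by simp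
    then show ?thesis unfolding inQ_def by blast
  qed
  have eqd: "Pl N (grmult (int p) N c' (eX p)) - Pl N c =
     (Pl N (grmult (int p) N c' (eX p)) - Pl N c' * Pl N (eX p)) + Pl N (eX p) * (Pl N c' - Q) + (Q * Pl N (eX p) - Pl N c)"
    by algebra
  have "inQ (int p) N (Pl N (grmult (int p) N c' (eX p)) - Pl N c)"
    unfolding eqd by (rule inQ_add[OF inQ_add[OF q1 q2] q3])
  then have "grmult (int p) N c' (eX p) = c"
    using Ltil_unique[OF p Ltil_grmult[OF p] Suc.prems(1)] unfolding N_def by blast
  then show ?case using x by simp
qed



lemma thresh:
  fixes P :: "nat \<Rightarrow> bool"
  assumes P0: "P 0" and dn: "\<And>j. P (Suc j) \<Longrightarrow> P j" and B: "\<not> P B"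
  shows "\<exists>L. \<forall>j. P j \<longleftrightarrow> j \<le> L"
proof -
  have down: "P j \<Longrightarrow> i \<le> j \<Longrightarrow> P i" for i j
    by (induction j) (auto simp: le_Suc_eq dest: dn)
  have sub: "{j. P j} \<subseteq> {..<B}"
  proof
    fix j assume "j \<in> {j. P j}"
    then have "P j" by simp
    then show "j \<in> {..<B}" using B down by (cases "B \<le> j") auto
  qed
  then have fin: "finite {j. P j}" by (rule finite_subset) simp
  define L where "L = Max {j. P j}"
  have PL: "P L" unfolding L_def using fin P0 Max_in[of "{j. P j}"] by auto
  have "\<forall>j. P j \<longleftrightarrow> j \<le> L"
  proof
    fix j
    show "P j \<longleftrightarrow> j \<le> L"
    proof
      assume "P j" then show "j \<le> L" unfolding L_def using fin by (simp add: Max_ge)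
    next
      assume "j \<le> L" then show "P j" using PL down by blast
    qed
  qed
  then show ?thesis by blast
qed

lemma the_thresh:
  fixes P :: "nat \<Rightarrow> bool"
  assumes "\<forall>j. P j \<longleftrightarrow> j \<le> L"
  shows "(THE l. P l \<and> \<not> P (Suc l)) = L"
proof (rule the_equality)
  show "P L \<and> \<not> P (Suc L)" using assms by simp
next
  fix l assume "P l \<and> \<not> P (Suc l)"
  then show "l = L" using assms by (metis le_antisym not_less_eq_eq)
qed

lemma Lam_modp:
  assumes F: "F \<in> Lam p n" and p: "prime p" and k: "k \<ge> 1"
  shows "F k i mod int p = F 1 i"
  using k
proof (induction k rule: dec_induct)
  case base
  have "0 \<le> F 1 i \<and> F 1 i < int p ^ 1" using F unfolding Lam_def by blast
  then have "0 \<le> F 1 i" "F 1 i < int p" by simp_all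
  then show ?case by simp
next
  case (step k)
  have "F (Suc k) i mod int p ^ k = F k i" using F unfolding Lam_def by blast
  moreover have "int p dvd int p ^ k" using step(1) by (simp add: dvd_power)
  ultimately have "F (Suc k) i mod int p = F k i mod int p" by (metis mod_mod_cancel)
  then show ?case using step by simp
qed

lemma Lam_Ltil: "F \<in> Lam p n \<Longrightarrow> F 1 \<in> Ltil p n"
proof -
  assume F: "F \<in> Lam p n"
  have "\<forall>i. 0 \<le> F 1 i \<and> F 1 i < int p ^ 1 \<and> (p ^ n \<le> i \<longrightarrow> F 1 i = 0)" using F unfolding Lam_def by blast
  then show ?thesis unfolding Ltil_def by simp
qed

lemma smul_one: "G \<in> Lam p n \<Longrightarrow> smul p 1 G = G"
  unfolding smul_def Lam_def by (intro ext) simp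

lemma pLam_Suc:
  assumes p: "prime p" and F: "F \<in> pLam p n (Suc j)"
  shows "F \<in> pLam p n j"
proof -
  obtain G where G: "G \<in> Lam p n" and FG: "F = smul p (int p ^ Suc j) G" using F unfolding pLam_def by blast
  define G' where "G' = smul p (int p) G"
  have pp: "int p > 0" using p prime_gt_0_nat by simp
  have "G' \<in> Lam p n" unfolding Lam_def
  proof (intro CollectI allI conjI impI)
    fix k i
    show "0 \<le> G' k i" "G' k i < int p ^ k" unfolding G'_def smul_def using pp by simp_all
    show "p ^ n \<le> i \<Longrightarrow> G' k i = 0" using G unfolding G'_def smul_def Lam_def by simp
    have "G (Suc k) i mod int p ^ k = G k i" using G unfolding Lam_def by blast
    then have "(int p * G (Suc k) i) mod int p ^ k = (int p * G k i) mod int p ^ k"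
      by (metis mod_mult_right_eq)
    moreover have "int p ^ k dvd int p ^ Suc k" by simp
    ultimately show "G' (Suc k) i mod int p ^ k = G' k i" unfolding G'_def smul_def
      by (metis mod_mod_cancel)
  qed
  moreover have "F = smul p (int p ^ j) G'"
  proof (intro ext)
    fix k i
    have "(int p ^ j * ((int p * G k i) mod int p ^ k)) mod int p ^ k = (int p ^ j * (int p * G k i)) mod int p ^ k"
      by (rule mod_mult_right_eq)
    also have "int p ^ j * (int p * G k i) = int p ^ Suc j * G k i" by (simp add: algebra_simps)
    finally show "F k i = smul p (int p ^ j) G' k i" unfolding FG G'_def smul_def by simp
  qed
  ultimately show ?thesis unfolding pLam_def by blast
qed

lemma pLam_zero:
  assumes F: "F \<in> pLam p n j" and k: "k \<le> j"
  shows "F k i = 0"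
proof -
  obtain G where FG: "F = smul p (int p ^ j) G" using F unfolding pLam_def by blast
  have "int p ^ k dvd int p ^ j" using k by (simp add: le_imp_power_dvd)
  then show ?thesis unfolding FG smul_def by simp
qed

lemma Lam_facts:
  assumes "F \<in> Lam p n"
  shows "0 \<le> F k i" "F k i < int p ^ k" "p ^ n \<le> i \<Longrightarrow> F k i = 0" "F (Suc k) i mod int p ^ k = F k i"
  using assms unfolding Lam_def by blast+

lemma pLam_1:
  assumes p: "prime p" and F: "F \<in> Lam p n" and z: "\<And>i. F 1 i = 0"
  shows "F \<in> pLam p n 1"
proof -
  define G where "G k i = F (Suc k) i div int p" for k i
  have pp: "int p > 0" using p prime_gt_0_nat by simp
  have md: "F (Suc k) i mod int p = 0" for k i using Lam_modp[OF F p, of "Suc k" i] z by simp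
  have "G \<in> Lam p n" unfolding Lam_def
  proof (intro CollectI allI conjI impI)
    fix k i
    have r: "0 \<le> F (Suc k) i" "F (Suc k) i < int p ^ Suc k" using Lam_facts[OF F] by blast+
    show "0 \<le> G k i" unfolding G_def using r pp by (simp add: pos_imp_zdiv_nonneg_iff)
    show "G k i < int p ^ k" unfolding G_def
    proof -
      have "int p * (F (Suc k) i div int p) \<le> F (Suc k) i"
        using md[of k i] by (metis mult_div_mod_eq add_0_right order_refl)
      also have "\<dots> < int p * int p ^ k" using r by simp
      finally show "F (Suc k) i div int p < int p ^ k" using pp by simp
    qed
    show "p ^ n \<le> i \<Longrightarrow> G k i = 0" unfolding G_def using Lam_facts(3)[OF F] by simp
    have "F (Suc (Suc k)) i mod (int p * int p ^ k) = int p * (F (Suc (Suc k)) i div int p mod int p ^ k) + F (Suc (Suc k)) i mod int p"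
      by (rule zmod_zmult2_eq) simp
    moreover have "F (Suc (Suc k)) i mod (int p ^ Suc k) = F (Suc k) i" by (rule Lam_facts(4)[OF F])
    ultimately have "F (Suc k) i = int p * (G (Suc k) i mod int p ^ k)" using md[of "Suc k" i] unfolding G_def by simp
    then show "G (Suc k) i mod int p ^ k = G k i" unfolding G_def using pp by simp
  qed
  moreover have "F = smul p (int p ^ 1) G"
  proof (intro ext)
    fix k i
    have "int p * G k i = F (Suc k) i" unfolding G_def using md[of k i] by (metis mult_div_mod_eq add_0_right)
    moreover have "F (Suc k) i mod int p ^ k = F k i" by (rule Lam_facts(4)[OF F])
    ultimately show "F k i = smul p (int p ^ 1) G k i" unfolding smul_def by simp
  qed
  ultimately show ?thesis unfolding pLam_def by blast
qed

lemma F1_nonzero: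
  assumes p: "prime p" and F: "F \<in> Lam p n" and nz: "F \<noteq> (\<lambda>k i. 0)" and mu: "mu p n F = 0"
  shows "\<exists>i. F 1 i \<noteq> 0"
proof (rule ccontr)
  assume "\<not> (\<exists>i. F 1 i \<noteq> 0)"
  then have z: "\<And>i. F 1 i = 0" by simp
  have "\<exists>k i. F k i \<noteq> 0"
  proof (rule ccontr)
    assume "\<not> (\<exists>k i. F k i \<noteq> 0)"
    then have "F = (\<lambda>k i. 0)" by (intro ext) simp
    then show False using nz by simp
  qed
  then obtain k0 i0 where k0: "F k0 i0 \<noteq> 0" by blast
  have "\<exists>L. \<forall>j. F \<in> pLam p n j \<longleftrightarrow> j \<le> L"
  proof (rule thresh)
    show "F \<in> pLam p n 0" unfolding pLam_def using F smul_one[OF F] by (intro CollectI exI[of _ F]) simp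
    show "\<And>j. F \<in> pLam p n (Suc j) \<Longrightarrow> F \<in> pLam p n j" by (rule pLam_Suc[OF p])
    show "F \<notin> pLam p n k0" using pLam_zero k0 by blast
  qed
  then obtain L where L: "\<forall>j. F \<in> pLam p n j \<longleftrightarrow> j \<le> L" by blast
  have "mu p n F = L" unfolding mu_def by (rule the_thresh[OF L])
  moreover have "1 \<le> L" using L pLam_1[OF p F z] by blast
  ultimately show False using mu by simp
qed



lemma lambda_eq:
  assumes F: "F \<in> Lam p n" and mu: "mu p n F = 0"
  shows "lambda p n F = (THE l. F 1 \<in> augpow p n l \<and> F 1 \<notin> augpow p n (Suc l))"
proof -
  have "(THE G. G \<in> Lam p n \<and> F = smul p (int p ^ mu p n F) G) = F"
  proof (rule the_equality)
    show "F \<in> Lam p n \<and> F = smul p (int p ^ mu p n F) F" using F smul_one[OF F] mu by simp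
  next
    fix G assume "G \<in> Lam p n \<and> F = smul p (int p ^ mu p n F) G"
    then show "G = F" using smul_one[of G p n] mu by simp
  qed
  then show ?thesis unfolding lambda_def Let_def by simp
qed

lemma augpow_iff:
  assumes p: "prime p" and n: "n \<ge> 1" and c: "c \<in> Ltil p n"
  shows "c \<in> augpow p n l \<longleftrightarrow> inK p (p ^ n) l (Pl (p ^ n) c)"
  using augpow_sub[OF p, of c n l] augpow_sup[OF p n c] by blast

lemma pie_pow_facts: "lead_coeff ([:-1,1:] ^ k :: int poly) = 1" "degree ([:-1,1:] ^ k :: int poly) = k"
proof -
  have "lead_coeff ([:-1,1:] ^ k :: int poly) = lead_coeff ([:-1,1:] :: int poly) ^ k" by (rule lead_coeff_power)
  then show "lead_coeff ([:-1,1:] ^ k :: int poly) = 1" by simp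
  show "degree ([:-1,1:] ^ k :: int poly) = k" by (simp add: degree_power_eq)
qed

lemma not_inK_N:
  assumes p: "prime p" and c: "c \<in> Ltil p n" and nz: "\<exists>i. c i \<noteq> 0"
  shows "\<not> inK p (p ^ n) (p ^ n) (Pl (p ^ n) c)"
proof
  define N where "N = p ^ n"
  assume "inK p (p ^ n) (p ^ n) (Pl (p ^ n) c)"
  then obtain A B C where ABC: "Pl N c = [:int p:] * A + [:-1,1:] ^ N * B + ([:0,1:] ^ N - 1) * C"
    unfolding inK_def N_def by blast
  obtain D where D: "[:0,1:] ^ N - 1 - [:-1,1:] ^ N = [:int p:] * D"
    using frob_iter[OF p, of n] unfolding N_def by (rule dvdE)
  have N0: "N > 0" unfolding N_def using p prime_gt_0_nat by simp
  have "[:int p:] dvd Pl N c"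
  proof (rule small_in_ideal[OF pie_pow_facts(1)])
    show "degree (Pl N c) < degree ([:-1,1:] ^ N :: int poly)" using degree_Pl[OF N0] by (simp add: pie_pow_facts)
    have g: "\<And>Q P A T B M C D :: int poly. Q = P * A + T * B + M * C \<Longrightarrow> M - T = P * D \<Longrightarrow>
       Q = P * (A + D * C) + T * (B + C)" by algebra
    have "Pl N c = [:int p:] * (A + D * C) + [:-1,1:] ^ N * (B + C)" by (rule g[OF ABC D])
    then show "Pl N c = smult (int p) (A + D * C) + [:-1,1:] ^ N * (B + C)" by simp
  qed
  then have d: "\<And>i. int p dvd coeff (Pl N c) i" by (simp add: const_poly_dvd_iff)
  have "\<forall>i. c i = 0"
  proof
    fix i
    show "c i = 0"
    proof (cases "i < N")
      case True
      then have "int p dvd c i" using d[of i] by (simp add: coeff_Pl)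
      moreover have "0 \<le> c i" "c i < int p" using c unfolding Ltil_def by blast+
      ultimately show ?thesis using small_dvd_eq[of "c i" "int p" 0] by simp
    next
      case False
      then show ?thesis using c unfolding Ltil_def N_def by simp
    qed
  qed
  then show False using nz by simp
qed

theorem lemma4p10:
  fixes p n :: nat and F G :: "nat \<Rightarrow> nat \<Rightarrow> int"
  assumes "prime p" and "odd p" and "n \<ge> 1"
    and "F \<in> Lam p n" and "G \<in> Lam p n"
    and "F \<noteq> (\<lambda>k i. 0)"
    and "\<exists>H \<in> Lam p (n - 1). lam_mult p n F G = nu p n H"
    and "mu p n F = 0"
    and "lambda p n F < p ^ (n - 1)"
  shows "\<exists>H \<in> Lam p (n - 1). G = nu p n H"
proof -
  note p = assms(1) and n = assms(3) and F = assms(4) and G = assms(5)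
  obtain H0 where H0: "H0 \<in> Lam p (n - 1)" "lam_mult p n F G = nu p n H0" using assms(7) by blast
  define e where "e = n - 1"
  define m where "m = p ^ e"
  define N where "N = p ^ n"
  have ne: "n = Suc e" unfolding e_def using n by simp
  have Nm: "N = p * m" unfolding N_def m_def ne by simp
  have p2: "p \<ge> 2" using p prime_ge_2_nat by blast
  have m0: "m > 0" unfolding m_def using p2 by simp
  have mN: "m < N" unfolding Nm using m0 p2 by simp
  have N0: "N > 0" using mN by simp
  have pp: "int p > 0" using p2 by simp
  have F1L: "F 1 \<in> Ltil p n" by (rule Lam_Ltil[OF F])
  have F1nz: "\<exists>i. F 1 i \<noteq> 0" by (rule F1_nonzero[OF p F assms(6) assms(8)])
  have "\<exists>L. \<forall>j. inK p N j (Pl N (F 1)) \<longleftrightarrow> j \<le> L"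
  proof (rule thresh)
    show "inK p N 0 (Pl N (F 1))" by (rule inK_0)
    show "\<And>j. inK p N (Suc j) (Pl N (F 1)) \<Longrightarrow> inK p N j (Pl N (F 1))" by (rule inK_Suc)
    show "\<not> inK p N N (Pl N (F 1))" unfolding N_def by (rule not_inK_N[OF p F1L F1nz])
  qed
  then obtain L where L: "\<forall>j. inK p N j (Pl N (F 1)) \<longleftrightarrow> j \<le> L" by blast
  have "\<forall>j. F 1 \<in> augpow p n j \<longleftrightarrow> j \<le> L" using L augpow_iff[OF p n F1L] unfolding N_def by simp
  then have "lambda p n F = L" unfolding lambda_eq[OF F assms(8)] by (rule the_thresh)
  then have Lm: "L < m" using assms(9) unfolding m_def e_def by simp
  have "inK p N L (Pl N (F 1))" using L by simp
  then obtain A B C where ABC: "Pl N (F 1) = [:int p:] * A + [:-1,1:] ^ L * B + ([:0,1:] ^ N - 1) * C"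
    unfolding inK_def by blast
  have nd: "\<not> int p dvd poly B 1"
  proof
    assume "int p dvd poly B 1"
    then obtain z where z: "poly B 1 = int p * z" by (auto simp: dvd_def)
    have "poly (B - [:poly B 1:]) 1 = 0" by simp
    then have "[:-1,1:] dvd (B - [:poly B 1:])" by (metis poly_eq_0_iff_dvd)
    then obtain q where q: "B - [:poly B 1:] = [:-1,1:] * q" by (rule dvdE)
    have zz: "[:poly B 1:] = [:int p:] * [:z:]" using z by simp
    have g: "\<And>Q P A W T B C0 M C q Z. Q = P * A + W * B + M * C \<Longrightarrow> B - C0 = T * q \<Longrightarrow> C0 = P * Z \<Longrightarrow>
       Q = P * (A + W * Z) + (W * T) * q + M * (C :: int poly)" by algebra
    have "Pl N (F 1) = [:int p:] * (A + [:-1,1:] ^ L * [:z:]) + ([:-1,1:] ^ L * [:-1,1:]) * q + ([:0,1:] ^ N - 1) * C"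
      by (rule g[OF ABC q zz])
    then have "inK p N (Suc L) (Pl N (F 1))" unfolding inK_def power_Suc2 by blast
    then show False using L by simp
  qed
  have per: "G k (i + m) = G k i" if i: "i + m < N" for k i
  proof -
    define K where "K = Suc k"
    define f where "f = Pl N (F K)"
    define g where "g = Pl N (G K)"
    have "[:int p:] dvd Pl N (\<lambda>i. F K i - F 1 i)"
    proof (rule Pl_dvd)
      fix i
      have "F K i mod int p = F 1 i" unfolding K_def by (rule Lam_modp[OF F p]) simp
      then show "int p dvd F K i - F 1 i" by (metis minus_mod_eq_mult_div dvd_triv_left)
    qed
    then obtain D where D: "f - Pl N (F 1) = [:int p:] * D" unfolding f_def Pl_diff by (rule dvdE)
    have PhiM: "[:0,1:] ^ N - 1 = Phi p (p ^ e) * ([:0,1:] ^ m - 1)" unfolding Nm m_def by (simp add: Phi_mult)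
    have fshape: "f = [:-1,1:] ^ L * B + smult (int p) (A + D) + Phi p (p ^ e) * (([:0,1:] ^ m - 1) * C)"
    proof -
      have g: "\<And>f Q P D A W B M C Ph U. f - Q = P * D \<Longrightarrow> Q = P * A + W * B + M * C \<Longrightarrow> M = Ph * U \<Longrightarrow>
        f = W * B + P * (A + D) + Ph * (U * (C :: int poly))" by algebra
      have "f = [:-1,1:] ^ L * B + [:int p:] * (A + D) + Phi p (p ^ e) * (([:0,1:] ^ m - 1) * C)"
        by (rule g[OF D ABC PhiM])
      then show ?thesis by simp
    qed
    define c where "c = lam_mult p n F G K"
    have c_def2: "c = grmult (int p ^ K) N (F K) (G K)" unfolding c_def lam_mult_def N_def by simp
    have cper: "c i = c (i mod m)" if "i < p * m" for i
    proof -
      have "c = nu p n H0 K" unfolding c_def H0(2) by simp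
      moreover have "i mod m < p * m" using m0 p2 by (metis Nm mN mod_less_divisor order_less_trans)
      ultimately show ?thesis using that unfolding nu_def N_def m_def e_def Nm by (simp add: Nm[unfolded N_def m_def e_def])
    qed
    have Pc: "Pl N c = Pl m c * Phi p m" unfolding Nm by (rule Pl_periodic) (rule cper)
    have Pc': "Pl N c = Pl m c * Phi p (p ^ e)" using Pc unfolding m_def by simp
    have "inQ (int p ^ K) N (Pl N c - f * g)" unfolding c_def2 f_def g_def by (rule grmult_Pl[OF N0])
    then obtain A2 B2 where AB2: "Pl N c - f * g = smult (int p ^ K) A2 + ([:0,1:] ^ N - 1) * B2"
      unfolding inQ_def by blast
    have fg: "f * g = smult (int p ^ Suc k) (- A2) + Phi p (p ^ e) * (Pl m c - ([:0,1:] ^ m - 1) * B2)"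
    proof -
      have g: "\<And>Pc FG S M B2 Ph U Pm. Pc - FG = S + M * B2 \<Longrightarrow> Pc = Pm * Ph \<Longrightarrow> M = Ph * U \<Longrightarrow>
         FG = - S + Ph * (Pm - U * (B2 :: int poly))" by algebra
      have "f * g = - smult (int p ^ K) A2 + Phi p (p ^ e) * (Pl m c - ([:0,1:] ^ m - 1) * B2)"
        by (rule g[OF AB2 Pc' PhiM])
      then show ?thesis unfolding K_def m_def by simp
    qed
    have Lphi: "L < p ^ Suc e - p ^ e"
    proof -
      have A: "p ^ Suc e - p ^ e = p * m - m" unfolding m_def by simp
      have B: "2 * m \<le> p * m" using p2 by (intro mult_right_mono) auto
      show ?thesis unfolding A using B Lm by linarith
    qed
    obtain a b where gab: "g = Phi p (p ^ e) * a + smult (int p ^ k) b"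
      using val_main[OF p fshape nd Lphi fg] by blast
    have "inQ (int p ^ k) N ([:0,1:] ^ m * g - g)"
    proof -
      have gg: "\<And>g Ph a S X M. g = Ph * a + S \<Longrightarrow> M = Ph * (X - 1) \<Longrightarrow> X * g - g = M * a + (X - 1) * (S :: int poly)"
        by algebra
      have "[:0,1:] ^ m * g - g = ([:0,1:] ^ N - 1) * a + ([:0,1:] ^ m - 1) * smult (int p ^ k) b"
        by (rule gg[OF gab PhiM])
      then have "[:0,1:] ^ m * g - g = smult (int p ^ k) (([:0,1:] ^ m - 1) * b) + ([:0,1:] ^ N - 1) * a"
        by (simp only: mult_smult_right add.commute)
      then show ?thesis unfolding inQ_def by blast
    qed
    then have "int p ^ k dvd (G K (i + m) - G K i)" unfolding g_def by (rule extract_per[OF m0 mN _ i])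
    then have "G K (i + m) mod int p ^ k = G K i mod int p ^ k" by (simp add: mod_eq_dvd_iff)
    then show ?thesis unfolding K_def using Lam_facts(4)[OF G] by simp
  qed
  have per2: "G k i = G k (i mod m)" if "i < N" for k i
    using that
  proof (induction i rule: less_induct)
    case (less i)
    show ?case
    proof (cases "i < m")
      case True then show ?thesis by simp
    next
      case False
      then have "G k i = G k ((i - m) + m)" by simp
      also have "\<dots> = G k (i - m)" using per[of "i - m" k] less.prems False by simp
      also have "\<dots> = G k ((i - m) mod m)" using less.IH[of "i - m"] less.prems False m0 by simp
      also have "(i - m) mod m = i mod m" using False by (simp add: le_mod_geq)
      finally show ?thesis .
    qed
  qed
  define H where "H k i = (if i < m then G k i else 0)" for k i
  have "H \<in> Lam p (n - 1)" unfolding Lam_def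
  proof (intro CollectI allI conjI impI)
    fix k i
    show "0 \<le> H k i" "H k i < int p ^ k" unfolding H_def using Lam_facts[OF G] pp by auto
    show "p ^ (n - 1) \<le> i \<Longrightarrow> H k i = 0" unfolding H_def m_def e_def by simp
    show "H (Suc k) i mod int p ^ k = H k i" unfolding H_def using Lam_facts(4)[OF G] by simp
  qed
  moreover have "G = nu p n H"
  proof (intro ext)
    fix k i
    show "G k i = nu p n H k i"
    proof (cases "i < N")
      case True
      then show ?thesis using per2[OF True, of k] m0 unfolding nu_def H_def N_def m_def e_def by simp
    next
      case False
      then show ?thesis using Lam_facts(3)[OF G] unfolding nu_def N_def by simp
    qed
  qed
  ultimately show ?thesis by blast
qed


end
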